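(* Fix a directed edge set $\mathcal{E}\subseteq\{(k,i)\in[n]^2: k\neq i\}$ and a randomized design (a probability distribution for ${\bf z}\in\{0,1\}^n$) with $0<\mathbb{E}[z_i]<1$ for all $i\in[n]$. Suppose the individually weighted linear estimator $\hat{\mathrm{est}}({\bf w},{\bf v})=\sum_{i\in[n]}\big(w_iz_i+v_i(1-z_i)\big)Y_i({\bf z})$ is unbiased for $\mathrm{TTE}$ under the heterogeneous additive network effects model with edge set $\mathcal{E}$, i.e. $\mathbb{E}[\hat{\mathrm{est}}({\bf w},{\bf v})]=\mathrm{TTE}$ for every choice of real parameters $\{\alpha_i\}_{i\in[n]}$, $\{\beta_i\}_{i\in[n]}$, $\{\gamma_{ki}\}_{(k,i)\in\mathcal{E}}$. Then necessarily $w_i=\frac{1}{n\mathbb{E}[z_i]}$ and $v_i=-\frac{1}{n\mathbb{E}[1-z_i]}$ for all $i$, i.e. \[\hat{\mathrm{est}}({\bf w},{\bf v})=\frac1n\sum_{i\in[n]}\Big(\frac{z_i}{\mathbb{E}[z_i]}-\frac{1-z_i}{\mathbb{E}[1-z_i]}\Big)Y_i({\bf z}),\] and the design must satisfy $\mathbb{P}(z_k=z_i)=1$ for all $(k,i)\in\mathcal{E}$.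
   Context: Population $[n]=\{1,\dots,n\}$; treatment vector ${\bf z}=(z_1,\dots,z_n)\in\{0,1\}^n$ is random, drawn from a distribution called the randomized design. Heterogeneous additive network effects model: for real parameters $\alpha_i$ (baseline), $\beta_i$ (direct effect) and $\gamma_{ki}$ (effect of $k$'s treatment on $i$), the potential outcomes are $Y_i({\bf z})=\alpha_i+\beta_iz_i+\sum_{k\in[n]}\gamma_{ki}z_k$, where $\gamma_{ki}=0$ unless $(k,i)\in\mathcal{E}$, and $\mathcal{E}$ is a set of ordered pairs $(k,i)$ with $k\neq i$ (the network). The parameters are deterministic; all expectations are over ${\bf z}$. Total treatment effect: $\mathrm{TTE}=\frac1n\sum_{i}(Y_i({\bf 1})-Y_i({\bf 0}))=\frac1n\big(\sum_i\beta_i+\sum_{(k,i)\in\mathcal{E}}\gamma_{ki}\big)$. An individually weighted linear estimator is $\hat{\mathrm{est}}({\bf w},{\bf v})=\sum_{i}(w_iz_i+v_i(1-z_i))Y_i({\bf z})$ with deterministic real weights ${\bf w},{\bf v}$ not depending on ${\bf z}$. *)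

theory Defs
  imports "HOL-Probability.Probability"
begin

text \<open>Treatment vectors are functions z :: nat => bool; unit i (i < n) is treated iff z i.
  The population [n] is represented by the indices {0..<n}.\<close>

definition ind :: "bool \<Rightarrow> real" where
  "ind b = (if b then 1 else 0)"

definition outcome :: "nat \<Rightarrow> (nat \<Rightarrow> real) \<Rightarrow> (nat \<Rightarrow> real) \<Rightarrow> (nat \<Rightarrow> nat \<Rightarrow> real)
    \<Rightarrow> (nat \<Rightarrow> bool) \<Rightarrow> nat \<Rightarrow> real" where
  "outcome n \<alpha> \<beta> \<gamma> z i = \<alpha> i + \<beta> i * ind (z i) + (\<Sum>k<n. \<gamma> k i * ind (z k))"

text \<open>Total treatment effect (gamma is assumed to vanish off the edge set).\<close>
definition TTE :: "nat \<Rightarrow> (nat \<times> nat) set \<Rightarrow> (nat \<Rightarrow> real) \<Rightarrow> (nat \<Rightarrow> nat \<Rightarrow> real) \<Rightarrow> real" where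
  "TTE n E \<beta> \<gamma> = (1 / real n) * ((\<Sum>i<n. \<beta> i) + (\<Sum>(k,i)\<in>E. \<gamma> k i))"

definition est :: "nat \<Rightarrow> (nat \<Rightarrow> real) \<Rightarrow> (nat \<Rightarrow> real) \<Rightarrow> (nat \<Rightarrow> real) \<Rightarrow> (nat \<Rightarrow> real)
    \<Rightarrow> (nat \<Rightarrow> nat \<Rightarrow> real) \<Rightarrow> (nat \<Rightarrow> bool) \<Rightarrow> real" where
  "est n w v \<alpha> \<beta> \<gamma> z =
     (\<Sum>i<n. (w i * ind (z i) + v i * (1 - ind (z i))) * outcome n \<alpha> \<beta> \<gamma> z i)"

end

theory Submission
  imports Defs
begin

lemma fin_supp:
  fixes p :: "(nat \<Rightarrow> bool) pmf"
  assumes "set_pmf p \<subseteq> {z. \<forall>i. n \<le> i \<longrightarrow> \<not> z i}"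
  shows "finite (set_pmf p)"
proof -
  have "{z::nat\<Rightarrow>bool. \<forall>i. n \<le> i \<longrightarrow> \<not> z i} \<subseteq> (\<lambda>S i. i \<in> S) ` Pow {..<n}"
  proof
    fix z :: "nat \<Rightarrow> bool" assume "z \<in> {z. \<forall>i. n \<le> i \<longrightarrow> \<not> z i}"
    then have "z = (\<lambda>i. i \<in> {i. i < n \<and> z i})" by (auto simp: fun_eq_iff) (meson not_le)
    then show "z \<in> (\<lambda>S i. i \<in> S) ` Pow {..<n}" by blast
  qed
  then show ?thesis using assms by (meson finite_Pow_iff finite_imageI finite_lessThan finite_subset)
qed

theorem theorem1:
  fixes n :: nat and E :: "(nat \<times> nat) set" and p :: "(nat \<Rightarrow> bool) pmf"
    and w v :: "nat \<Rightarrow> real"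
  assumes E: "E \<subseteq> {(k, i). k < n \<and> i < n \<and> k \<noteq> i}"
    and design: "set_pmf p \<subseteq> {z. \<forall>i. n \<le> i \<longrightarrow> \<not> z i}"
    and nondeg: "\<And>i. i < n \<Longrightarrow>
        0 < measure_pmf.expectation p (\<lambda>z. ind (z i)) \<and>
        measure_pmf.expectation p (\<lambda>z. ind (z i)) < 1"
    and unbiased: "\<And>\<alpha> \<beta> \<gamma>. (\<forall>k i. (k, i) \<notin> E \<longrightarrow> \<gamma> k i = 0) \<Longrightarrow>
        measure_pmf.expectation p (est n w v \<alpha> \<beta> \<gamma>) = TTE n E \<beta> \<gamma>"
  shows "(\<forall>i<n. w i = 1 / (real n * measure_pmf.expectation p (\<lambda>z. ind (z i))) \<and>
                 v i = - 1 / (real n * measure_pmf.expectation p (\<lambda>z. 1 - ind (z i))))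
       \<and> (\<forall>(k, i)\<in>E. measure_pmf.prob p {z. z k = z i} = 1)"
proof -
  have fin: "finite (set_pmf p)" using fin_supp[OF design] .
  have int: "\<And>f::(nat\<Rightarrow>bool)\<Rightarrow>real. integrable (measure_pmf p) f"
    by (rule integrable_measure_pmf_finite[OF fin])
  define \<pi> where "\<pi> i = measure_pmf.expectation p (\<lambda>z. ind (z i))" for i
  have c1: "measure_pmf.expectation p (\<lambda>z. 1 - ind (z i)) = 1 - \<pi> i" for i
    unfolding \<pi>_def by (subst Bochner_Integration.integral_diff[OF int int]) simp
  have indsq: "ind b * ind b = ind b" for b by (simp add: ind_def)
  have wv: "w j = 1 / (real n * \<pi> j) \<and> v j = - 1 / (real n * (1 - \<pi> j))" if j: "j < n" for j
  proof -
    have pj: "0 < \<pi> j" "\<pi> j < 1" using nondeg[OF j] by (auto simp: \<pi>_def)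
    have n0: "real n > 0" using j by simp
    define \<alpha> :: "nat \<Rightarrow> real" where "\<alpha> i = (if i = j then 1 else 0)" for i
    have e1: "est n w v \<alpha> (\<lambda>_. 0) (\<lambda>_ _. 0) z = w j * ind (z j) + v j * (1 - ind (z j))" for z
    proof -
      have "est n w v \<alpha> (\<lambda>_. 0) (\<lambda>_ _. 0) z = (\<Sum>i<n. if i = j then w j * ind (z j) + v j * (1 - ind (z j)) else 0)"
        unfolding est_def outcome_def by (rule sum.cong) (auto simp: \<alpha>_def)
      then show ?thesis using j by simp
    qed
    have "measure_pmf.expectation p (est n w v \<alpha> (\<lambda>_. 0) (\<lambda>_ _. 0)) = 0"
      using unbiased[of "\<lambda>_ _. 0" \<alpha> "\<lambda>_. 0"] by (simp add: TTE_def)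
    then have h1: "w j * \<pi> j + v j * (1 - \<pi> j) = 0"
      unfolding e1 \<pi>_def using c1[of j]
      by (simp add: Bochner_Integration.integral_add[OF int int] \<pi>_def)
    define \<beta> :: "nat \<Rightarrow> real" where "\<beta> i = (if i = j then 1 else 0)" for i
    have e2: "est n w v (\<lambda>_. 0) \<beta> (\<lambda>_ _. 0) z = w j * ind (z j)" for z
    proof -
      have "est n w v (\<lambda>_. 0) \<beta> (\<lambda>_ _. 0) z = (\<Sum>i<n. if i = j then w j * ind (z j) else 0)"
        unfolding est_def outcome_def by (rule sum.cong) (auto simp: \<beta>_def ind_def)
      then show ?thesis using j by simp
    qed
    have "measure_pmf.expectation p (est n w v (\<lambda>_. 0) \<beta> (\<lambda>_ _. 0)) = 1 / real n"
      using unbiased[of "\<lambda>_ _. 0" "\<lambda>_. 0" \<beta>] j by (simp add: TTE_def \<beta>_def)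
    then have h2: "w j * \<pi> j = 1 / real n"
      unfolding e2 \<pi>_def by simp
    have "w j = 1 / (real n * \<pi> j)" using h2 pj n0 by (simp add: field_simps)
    moreover have "v j = - 1 / (real n * (1 - \<pi> j))"
    proof -
      have "v j * (1 - \<pi> j) = - (w j * \<pi> j)" using h1 by linarith
      then have "real n * (v j * (1 - \<pi> j)) = -1" using h2 n0 by simp
      then show ?thesis using pj n0 by (simp add: field_simps)
    qed
    ultimately show ?thesis by simp
  qed
  have edge: "measure_pmf.prob p {z. z k = z i} = 1" if ki: "(k, i) \<in> E" for k i
  proof -
    have k: "k < n" and i: "i < n" and kin: "k \<noteq> i" using ki E by auto
    have pj: "0 < \<pi> i" "\<pi> i < 1" using nondeg[OF i] by (auto simp: \<pi>_def)
    have n0: "real n > 0" using i by simp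
    define \<gamma> :: "nat \<Rightarrow> nat \<Rightarrow> real" where "\<gamma> a b = (if (a, b) = (k, i) then 1 else 0)" for a b
    have g0: "\<forall>a b. (a, b) \<notin> E \<longrightarrow> \<gamma> a b = 0" using ki by (auto simp: \<gamma>_def)
    have finE: "finite E"
      by (rule finite_subset[OF _ finite_SigmaI[of "{..<n}" "\<lambda>_. {..<n}"]]) (use E in auto)
    have "(\<Sum>(a, b)\<in>E. \<gamma> a b) = (\<Sum>x\<in>E. if x = (k, i) then 1 else 0)"
      by (rule sum.cong) (auto simp: \<gamma>_def split: if_split_asm)
    also have "\<dots> = 1" using finE ki by simp
    finally have sg: "(\<Sum>(a, b)\<in>E. \<gamma> a b) = 1" .
    have inner: "(\<Sum>m<n. \<gamma> m b * ind (z m)) = (if b = i then ind (z k) else 0)" for b z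
    proof -
      have "(\<Sum>m<n. \<gamma> m b * ind (z m)) = (\<Sum>m<n. if m = k then (if b = i then ind (z k) else 0) else 0)"
        by (rule sum.cong) (auto simp: \<gamma>_def)
      then show ?thesis using k by simp
    qed
    have e3: "est n w v (\<lambda>_. 0) (\<lambda>_. 0) \<gamma> z
        = (w i * ind (z i) + v i * (1 - ind (z i))) * ind (z k)" for z
    proof -
      have "est n w v (\<lambda>_. 0) (\<lambda>_. 0) \<gamma> z = (\<Sum>j<n. if j = i then (w i * ind (z i) + v i * (1 - ind (z i))) * ind (z k) else 0)"
        unfolding est_def outcome_def by (rule sum.cong) (auto simp: inner)
      then show ?thesis using i by simp
    qed
    define a where "a = measure_pmf.expectation p (\<lambda>z. ind (z i) * ind (z k))"
    define b where "b = measure_pmf.expectation p (\<lambda>z. (1 - ind (z i)) * ind (z k))"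
    define c where "c = measure_pmf.expectation p (\<lambda>z. ind (z i) * (1 - ind (z k)))"
    have "measure_pmf.expectation p (est n w v (\<lambda>_. 0) (\<lambda>_. 0) \<gamma>) = 1 / real n"
      using unbiased[OF g0] sg by (simp add: TTE_def)
    then have "w i * a + v i * b = 1 / real n"
      unfolding e3 a_def b_def
      by (simp add: distrib_right mult.assoc Bochner_Integration.integral_add[OF int int])
    then have "(a / \<pi> i - b / (1 - \<pi> i)) / real n = 1 / real n"
      using wv[OF i] by (simp add: diff_divide_distrib mult.commute)
    then have h: "a / \<pi> i - b / (1 - \<pi> i) = 1"
      using n0 by (simp add: divide_cancel_right)
    have ca: "c = \<pi> i - a"
      unfolding a_def c_def \<pi>_def
      by (simp add: right_diff_distrib Bochner_Integration.integral_diff[OF int int])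
    have b0: "b \<ge> 0" unfolding b_def by (rule integral_nonneg_AE) (simp add: ind_def)
    have c0: "c \<ge> 0" unfolding c_def by (rule integral_nonneg_AE) (simp add: ind_def)
    have "a / \<pi> i \<le> 1" using ca c0 pj by (simp add: field_simps)
    moreover have "b / (1 - \<pi> i) \<ge> 0" using b0 pj by simp
    ultimately have "b / (1 - \<pi> i) = 0" "a / \<pi> i = 1" using h by linarith+
    then have bz: "b = 0" and cz: "c = 0" using pj ca by (auto simp: field_simps)
    have pt: "indicator {z. z k = z i} z = 1 - (ind (z i) * (1 - ind (z k)) + (1 - ind (z i)) * ind (z k))"
      for z :: "nat \<Rightarrow> bool" by (simp add: ind_def indicator_def)
    have "measure_pmf.prob p {z. z k = z i}
        = measure_pmf.expectation p (indicator {z. z k = z i})" by simp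
    also have "\<dots> = 1 - (c + b)"
      unfolding pt b_def c_def
      by (simp add: Bochner_Integration.integral_diff[OF int int] Bochner_Integration.integral_add[OF int int])
    finally show ?thesis using bz cz by simp
  qed
  show ?thesis using wv edge c1 by (auto simp: \<pi>_def)
qed

end
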